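(* Let $N\in\mathbb{N}$ and let $\mathbf{X}$ be an $\mathbb{R}^N$-valued Gaussian random vector with zero mean and symmetric positive-definite covariance matrix $\Sigma$. Fix $l\in\mathbb{N}_0$, let $K_{N,l}=\binom{N+l-1}{l}$, and let $\Psi_l(\mathbf{x};\Sigma)\in\mathbb{R}^{K_{N,l}}$ be a column vector whose entries are the polynomials $\Psi_{\mathbf{j}}(\mathbf{x};\Sigma)$, $|\mathbf{j}|=l$, $\mathbf{j}\in\mathbb{N}_0^N$, in some fixed order. Then the $K_{N,l}\times K_{N,l}$ matrix $\mathbf{A}_l=\mathbb{E}[\Psi_l(\mathbf{X};\Sigma)\Psi_l^T(\mathbf{X};\Sigma)]$ is symmetric and positive-definite.
   Context: For $\mathbf{j}\in\mathbb{N}_0^N$, $|\mathbf{j}|=j_1+\dots+j_N$ and $(\partial/\partial\mathbf{x})^{\mathbf{j}}=\partial^{|\mathbf{j}|}/\partial x_1^{j_1}\cdots\partial x_N^{j_N}$. The density of $\mathbf{X}$ is $\phi(\mathbf{x};\Sigma)=(2\pi)^{-N/2}(\det\Sigma)^{-1/2}\exp(-\tfrac12\mathbf{x}^T\Sigma^{-1}\mathbf{x})$; $H_{\mathbf{j}}(\mathbf{x};\Sigma)=\frac{(-1)^{|\mathbf{j}|}}{\phi(\mathbf{x};\Sigma)}\left(\frac{\partial}{\partial\mathbf{x}}\right)^{\mathbf{j}}\phi(\mathbf{x};\Sigma)$ and $\Psi_{\mathbf{j}}(\mathbf{x};\Sigma)=H_{\mathbf{j}}(\mathbf{x};\Sigma)/\sqrt{\mathbb{E}[H_{\mathbf{j}}^2(\mathbf{X};\Sigma)]}$.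 *)

theory Defs
  imports "HOL-Probability.Probability"
begin

definition pdiff :: "'n::finite \<Rightarrow> (real^'n \<Rightarrow> real) \<Rightarrow> (real^'n \<Rightarrow> real)" where
  "pdiff i f = (\<lambda>x. deriv (\<lambda>t. f (x + t *\<^sub>R axis i 1)) 0)"

definition mi_order :: "('n::finite \<Rightarrow> nat) \<Rightarrow> nat" where
  "mi_order j = (\<Sum>i\<in>UNIV. j i)"

text \<open>The order of differentiation is fixed by an (arbitrary) list of directions in which each i
  occurs exactly j i times; for smooth functions (as used here) the result does not depend on it.\<close>
definition mderiv :: "('n::finite \<Rightarrow> nat) \<Rightarrow> (real^'n \<Rightarrow> real) \<Rightarrow> (real^'n \<Rightarrow> real)" where
  "mderiv j f = foldr pdiff (SOME ds. \<forall>i. count_list ds i = j i) f"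

definition gauss_density :: "real^'n^'n \<Rightarrow> real^'n \<Rightarrow> real" where
  "gauss_density S x =
     (2 * pi) powr (- real CARD('n) / 2) * (det S) powr (- 1 / 2)
       * exp (- (1/2) * (x \<bullet> (matrix_inv S *v x)))"

definition hermite :: "real^'n^'n \<Rightarrow> ('n::finite \<Rightarrow> nat) \<Rightarrow> real^'n \<Rightarrow> real" where
  "hermite S j x = (- 1) ^ mi_order j / gauss_density S x * mderiv j (gauss_density S) x"

definition psi :: "real^'n^'n \<Rightarrow> ('n::finite \<Rightarrow> nat) \<Rightarrow> real^'n \<Rightarrow> real" where
  "psi S j x = hermite S j x /
     sqrt (LINT y|lborel. (hermite S j y)^2 * gauss_density S y)"

definition pos_def_mat :: "nat \<Rightarrow> (nat \<Rightarrow> nat \<Rightarrow> real) \<Rightarrow> bool" where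
  "pos_def_mat K A \<longleftrightarrow>
     (\<forall>v::nat \<Rightarrow> real. (\<exists>a<K. v a \<noteq> 0) \<longrightarrow> (\<Sum>a<K. \<Sum>b<K. v a * A a b * v b) > 0)"

end

theory Submission
  imports Defs
begin

inductive pf :: "nat \<Rightarrow> (real^'n::finite \<Rightarrow> real) \<Rightarrow> bool" where
  pf_const: "pf k (\<lambda>x. c)"
| pf_lin: "pf 1 (\<lambda>x. a \<bullet> x)"
| pf_add: "pf k p \<Longrightarrow> pf k q \<Longrightarrow> pf k (\<lambda>x. p x + q x)"
| pf_mul: "pf k p \<Longrightarrow> pf m q \<Longrightarrow> pf (k + m) (\<lambda>x. p x * q x)"
| pf_mono: "pf k p \<Longrightarrow> k \<le> m \<Longrightarrow> pf m p"

lemma pf_cont: "pf k p \<Longrightarrow> continuous_on UNIV p"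
  by (induction rule: pf.induct) (auto intro!: continuous_intros)

lemma pf_meas: "pf k p \<Longrightarrow> p \<in> borel_measurable borel"
  using pf_cont borel_measurable_continuous_onI by blast

lemma pf_cmul: "pf k p \<Longrightarrow> pf k (\<lambda>x. c * p x)"
  using pf_mul[OF pf_const, of k p 0 c] by simp

lemma pf_diff: "pf k p \<Longrightarrow> pf k q \<Longrightarrow> pf k (\<lambda>x. p x - q x)"
  using pf_add[of k p "\<lambda>x. (-1) * q x"] pf_cmul[of k q "-1"] by simp

lemma pf_sum: "finite A \<Longrightarrow> (\<And>a. a \<in> A \<Longrightarrow> pf k (f a)) \<Longrightarrow> pf k (\<lambda>x. \<Sum>a\<in>A. f a x)"
  by (induction A rule: finite_induct) (auto intro: pf_const pf_add)

lemma pf_deriv: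
  assumes "pf k p"
  shows "\<exists>q. pf (k - 1) q \<and> (k = 0 \<longrightarrow> q = (\<lambda>_. 0)) \<and>
     (\<forall>x. ((\<lambda>t. p (x + t *\<^sub>R axis i 1)) has_real_derivative q x) (at 0))"
  using assms
proof (induction rule: pf.induct)
  case (pf_const k c)
  then show ?case by (intro exI[of _ "\<lambda>_. 0"]) (auto intro: pf.pf_const)
next
  case (pf_lin a)
  have "((\<lambda>t. a \<bullet> (x + t *\<^sub>R axis i 1)) has_real_derivative a $ i) (at 0)" for x
  proof -
    have "(\<lambda>t. a \<bullet> (x + t *\<^sub>R axis i 1)) = (\<lambda>t. a \<bullet> x + t * (a $ i))"
      by (auto simp: inner_add_right inner_axis)
    moreover have "((\<lambda>t. a \<bullet> x + t * (a $ i)) has_real_derivative a $ i) (at 0)"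
      by (auto intro!: derivative_eq_intros)
    ultimately show ?thesis by simp
  qed
  then show ?case by (intro exI[of _ "\<lambda>_. a $ i"]) (auto intro: pf.pf_const)
next
  case (pf_add k p q)
  then obtain p' q' where p': "pf (k - 1) p'" "k = 0 \<longrightarrow> p' = (\<lambda>_. 0)"
     "\<forall>x. ((\<lambda>t. p (x + t *\<^sub>R axis i 1)) has_real_derivative p' x) (at 0)"
    and q': "pf (k - 1) q'" "k = 0 \<longrightarrow> q' = (\<lambda>_. 0)"
     "\<forall>x. ((\<lambda>t. q (x + t *\<^sub>R axis i 1)) has_real_derivative q' x) (at 0)" by blast
  show ?case
    by (rule exI[of _ "\<lambda>x. p' x + q' x"]) (use p' q' in \<open>auto intro!: pf.pf_add derivative_eq_intros\<close>)
next
  case (pf_mul k p m q)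
  then obtain p' q' where p': "pf (k - 1) p'" "k = 0 \<longrightarrow> p' = (\<lambda>_. 0)"
     "\<forall>x. ((\<lambda>t. p (x + t *\<^sub>R axis i 1)) has_real_derivative p' x) (at 0)"
    and q': "pf (m - 1) q'" "m = 0 \<longrightarrow> q' = (\<lambda>_. 0)"
     "\<forall>x. ((\<lambda>t. q (x + t *\<^sub>R axis i 1)) has_real_derivative q' x) (at 0)" by blast
  have D: "((\<lambda>t. p (x + t *\<^sub>R axis i 1) * q (x + t *\<^sub>R axis i 1)) has_real_derivative
      p' x * q x + p x * q' x) (at 0)" for x
    using DERIV_mult[OF p'(3)[rule_format, of x] q'(3)[rule_format, of x]] by (simp add: mult.commute)
  show ?case
  proof (cases "k = 0")
    case True
    with p' have "p' = (\<lambda>_. 0)" by simp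
    show ?thesis
      apply (rule exI[of _ "\<lambda>x. p x * q' x"])
      using True D \<open>p' = _\<close> q' pf.pf_mul[OF pf_mul.hyps(1) q'(1)] by auto
  next
    case k: False
    show ?thesis
    proof (cases "m = 0")
      case True
      with q' have "q' = (\<lambda>_. 0)" by simp
      show ?thesis
        apply (rule exI[of _ "\<lambda>x. p' x * q x"])
        using True D \<open>q' = _\<close> p' pf.pf_mul[OF p'(1) pf_mul.hyps(2)] by auto
    next
      case m: False
      have "pf (k + m - 1) (\<lambda>x. p' x * q x)"
        using pf.pf_mul[OF p'(1) pf_mul.hyps(2)] k m by (auto intro: pf.pf_mono)
      moreover have "pf (k + m - 1) (\<lambda>x. p x * q' x)"
        using pf.pf_mul[OF pf_mul.hyps(1) q'(1)] k m by (auto intro: pf.pf_mono)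
      ultimately show ?thesis
        using D k by (intro exI[of _ "\<lambda>x. p' x * q x + p x * q' x"]) (auto intro: pf.pf_add)
    qed
  qed
next
  case (pf_mono k p m)
  then obtain q where q: "pf (k - 1) q" "k = 0 \<longrightarrow> q = (\<lambda>_. 0)"
     "\<forall>x. ((\<lambda>t. p (x + t *\<^sub>R axis i 1)) has_real_derivative q x) (at 0)" by blast
  have "pf (m - 1) q" using q(1) pf_mono.hyps(2) by (auto intro: pf.pf_mono)
  then show ?case using q pf_mono.hyps(2) by (intro exI[of _ q]) auto
qed

lemma pf_bound: "pf k p \<Longrightarrow> \<exists>C\<ge>0. \<forall>x. \<bar>p x\<bar> \<le> C * (1 + norm x) ^ k"
proof (induction rule: pf.induct)
  case (pf_const k c)
  have "\<bar>c\<bar> \<le> \<bar>c\<bar> * (1 + norm x) ^ k" for x :: "real^'n"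
    by (rule mult_le_cancel_left1[THEN iffD2]) (auto intro: one_le_power)
  then show ?case by (intro exI[of _ "\<bar>c\<bar>"]) auto
next
  case (pf_lin a)
  have "\<bar>a \<bullet> x\<bar> \<le> norm a * (1 + norm x) ^ 1" for x
    using Cauchy_Schwarz_ineq2[of a x] by (smt (verit) mult_left_mono norm_ge_zero power_one_right)
  then show ?case by (intro exI[of _ "norm a"]) auto
next
  case (pf_add k p q)
  then obtain C D where "C \<ge> 0" "D \<ge> 0" "\<forall>x. \<bar>p x\<bar> \<le> C * (1 + norm x) ^ k" "\<forall>x. \<bar>q x\<bar> \<le> D * (1 + norm x) ^ k"
    by blast
  then show ?case by (intro exI[of _ "C + D"]) (auto simp: algebra_simps intro: abs_triangle_ineq[THEN order_trans] add_mono)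
next
  case (pf_mul k p m q)
  then obtain C D where CD: "C \<ge> 0" "D \<ge> 0" "\<forall>x. \<bar>p x\<bar> \<le> C * (1 + norm x) ^ k" "\<forall>x. \<bar>q x\<bar> \<le> D * (1 + norm x) ^ m"
    by blast
  have "\<bar>p x * q x\<bar> \<le> (C * D) * (1 + norm x) ^ (k + m)" for x
  proof -
    have "\<bar>p x * q x\<bar> = \<bar>p x\<bar> * \<bar>q x\<bar>" by (simp add: abs_mult)
    also have "\<dots> \<le> (C * (1 + norm x) ^ k) * (D * (1 + norm x) ^ m)"
      using CD by (intro mult_mono) auto
    also have "\<dots> = (C * D) * (1 + norm x) ^ (k + m)" by (simp add: power_add algebra_simps)
    finally show ?thesis .
  qed
  then show ?case using CD by (intro exI[of _ "C * D"]) auto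
next
  case (pf_mono k p m)
  then obtain C where C: "C \<ge> 0" "\<forall>x. \<bar>p x\<bar> \<le> C * (1 + norm x) ^ k" by blast
  have "\<bar>p x\<bar> \<le> C * (1 + norm x) ^ m" for x
    using C(2)[rule_format, of x] mult_left_mono[OF power_increasing[OF pf_mono.hyps(2), of "1 + norm x"] C(1)]
    by auto
  then show ?case using C by auto
qed

lemma pf_lim0:
  assumes "pf k p"
  shows "((\<lambda>s. p (s *\<^sub>R x) / s ^ (k + 1)) \<longlongrightarrow> 0) at_top"
proof -
  obtain C where C: "C \<ge> 0" "\<forall>x. \<bar>p x\<bar> \<le> C * (1 + norm x) ^ k" using pf_bound[OF assms] by blast
  define B where "B = C * (1 + norm x) ^ k"
  have ev: "eventually (\<lambda>s. norm (p (s *\<^sub>R x) / s ^ (k + 1)) \<le> B / s) at_top"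
    using eventually_ge_at_top[of "1::real"]
  proof eventually_elim
    case (elim s)
    have "1 + norm (s *\<^sub>R x) \<le> s * (1 + norm x)" using elim by (simp add: algebra_simps)
    then have "(1 + norm (s *\<^sub>R x)) ^ k \<le> (s * (1 + norm x)) ^ k"
      by (intro power_mono) auto
    then have "\<bar>p (s *\<^sub>R x)\<bar> \<le> C * (s * (1 + norm x)) ^ k"
      using C(2)[rule_format, of "s *\<^sub>R x"] mult_left_mono[OF _ C(1)] by (meson order_trans)
    also have "\<dots> = B * s ^ k" by (simp add: B_def power_mult_distrib)
    finally have "\<bar>p (s *\<^sub>R x)\<bar> \<le> B * s ^ k" .
    then show ?case using elim
      by (simp add: abs_divide divide_simps power_add)
  qed
  have "((\<lambda>s. B / s) \<longlongrightarrow> 0) at_top"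
    by (intro tendsto_divide_0[OF tendsto_const] filterlim_at_top_imp_at_infinity filterlim_ident)
  then show ?thesis using Lim_null_comparison[OF ev] by blast
qed

lemma prod_list_count: "prod_list (map f ds) = (\<Prod>i\<in>(UNIV::'n::finite set). (f i :: real) ^ count_list ds i)"
proof (induction ds)
  case Nil then show ?case by simp
next
  case (Cons d ds)
  have "(\<Prod>i\<in>UNIV. f i ^ count_list (d # ds) i) =
      (\<Prod>i\<in>UNIV. (if i = d then f i else 1) * f i ^ count_list ds i)"
    by (intro prod.cong) auto
  also have "\<dots> = (\<Prod>i\<in>UNIV. (if i = d then f i else 1)) * (\<Prod>i\<in>UNIV. f i ^ count_list ds i)"
    by (rule prod.distrib)
  also have "\<dots> = f d * prod_list (map f ds)" using Cons by (simp add: prod.delta)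
  finally show ?case by simp
qed

lemma ex_count_list: "\<exists>ds. \<forall>i. count_list ds i = (j::'n::finite \<Rightarrow> nat) i"
proof -
  obtain ds where ds: "mset ds = (\<Sum>i\<in>UNIV. replicate_mset (j i) i)" using ex_mset by blast
  have "count_list ds i = j i" for i
  proof -
    have "count_list ds i = count (mset ds) i" by (simp add: count_mset)
    also have "\<dots> = (\<Sum>k\<in>UNIV. count (replicate_mset (j k) k) i)" by (simp add: ds count_sum)
    also have "\<dots> = (\<Sum>k\<in>UNIV. if k = i then j i else 0)" by (intro sum.cong) auto
    also have "\<dots> = j i" by simp
    finally show ?thesis .
  qed
  then show ?thesis by blast
qed

lemma integrable_scale:
  fixes f :: "'a::euclidean_space \<Rightarrow> real"
  assumes f: "integrable lborel f" and c: "c \<noteq> 0"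
  shows "integrable lborel (\<lambda>x. f (c *\<^sub>R x))"
proof -
  have [measurable]: "f \<in> borel_measurable borel" using f by (simp add: borel_measurable_integrable)
  have eq: "(\<integral>\<^sup>+x. ennreal (norm (f x)) \<partial>lborel) = ennreal (\<bar>c\<bar>^DIM('a)) * (\<integral>\<^sup>+x. ennreal (norm (f (c *\<^sub>R x))) \<partial>lborel)"
    by (subst lborel_affine[OF c, of 0]) (simp add: nn_integral_density nn_integral_distr nn_integral_cmult)
  have "(\<integral>\<^sup>+x. ennreal (norm (f x)) \<partial>lborel) < \<infinity>" using f unfolding integrable_iff_bounded by simp
  then have "(\<integral>\<^sup>+x. ennreal (norm (f (c *\<^sub>R x))) \<partial>lborel) < \<infinity>"
  proof -
    have "ennreal (\<bar>c\<bar>^DIM('a)) * (\<integral>\<^sup>+x. ennreal (norm (f (c *\<^sub>R x))) \<partial>lborel) < \<infinity>"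
      using \<open>_ < \<infinity>\<close> eq by simp
    then show ?thesis using c by (auto simp: ennreal_mult_less_top)
  qed
  then show ?thesis unfolding integrable_iff_bounded by simp
qed

lemma integral_pos:
  fixes f :: "'a::euclidean_space \<Rightarrow> real"
  assumes cont: "continuous_on UNIV f" and nn: "\<And>x. f x \<ge> 0" and int: "integrable lborel f"
    and pos: "f z > 0"
  shows "integral\<^sup>L lborel f > 0"
proof (rule ccontr)
  assume "\<not> integral\<^sup>L lborel f > 0"
  moreover have "integral\<^sup>L lborel f \<ge> 0" using nn by simp
  ultimately have "integral\<^sup>L lborel f = 0" by simp
  then have AE: "AE x in lborel. f x = 0" using integral_nonneg_eq_0_iff_AE[OF int] nn by simp
  have meas: "f \<in> borel_measurable borel" using cont borel_measurable_continuous_onI by blast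
  have "{x\<in>space lborel. \<not> f x = 0} \<in> sets lborel" using meas by simp
  then have N: "emeasure lborel {x\<in>space lborel. \<not> f x = 0} = 0"
    using AE_iff_measurable[OF \<open>_ \<in> sets lborel\<close> refl] AE by simp
  have "open {x. f x > 0}"
    using open_Collect_less[of "\<lambda>_. 0" f] cont by (simp add: continuous_on_const)
  moreover have "z \<in> {x. f x > 0}" using pos by simp
  ultimately obtain e where e: "e > 0" "ball z e \<subseteq> {x. f x > 0}" using open_contains_ball_eq by blast
  then have "emeasure lborel (ball z e) \<le> emeasure lborel {x\<in>space lborel. \<not> f x = 0}"
    using \<open>_ \<in> sets lborel\<close> by (intro emeasure_mono) auto
  then have "emeasure lborel (ball z e) = 0" using N by simp
  moreover have "measure lborel (ball z e) > 0" using content_ball_pos[OF e(1)] by simp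
  ultimately show False by (simp add: measure_def)
qed


lemma mono_indep:
  fixes c :: "('n \<Rightarrow> nat) \<Rightarrow> real"
  assumes "finite I" "finite J" "\<forall>j\<in>J. \<forall>j'\<in>J. (\<forall>i\<in>I. j i = j' i) \<longrightarrow> j = j'"
    "\<forall>y. (\<Sum>j\<in>J. c j * (\<Prod>i\<in>I. y i ^ j i)) = 0"
  shows "\<forall>j\<in>J. c j = 0"
  using assms
proof (induction I arbitrary: J rule: finite_induct)
  case empty
  show ?case
  proof
    fix j assume j: "j \<in> J"
    then have "J = {j}" using empty.prems(2) by auto
    then show "c j = 0" using empty.prems(3) by simp
  qed
next
  case (insert i0 I)
  define K where "K = Max ((\<lambda>j. j i0) ` J)"
  have jK: "j i0 \<le> K" if "j \<in> J" for j using that insert.prems(1) unfolding K_def by auto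
  define b where "b k y = (\<Sum>j\<in>{j\<in>J. j i0 = k}. c j * (\<Prod>i\<in>I. y i ^ j i))" for k y
  have b0: "b k y = 0" if "k \<le> K" for k y
  proof -
    have "\<forall>t. (\<Sum>k\<le>K. b k y * t ^ k) = 0"
    proof
      fix t :: real
      have "(\<Sum>k\<le>K. b k y * t ^ k) = (\<Sum>k\<le>K. \<Sum>j\<in>{j\<in>J. j i0 = k}. c j * (t ^ j i0 * (\<Prod>i\<in>I. y i ^ j i)))"
        unfolding b_def sum_distrib_right by (intro sum.cong refl) (auto simp: algebra_simps)
      also have "\<dots> = (\<Sum>j\<in>J. c j * (t ^ j i0 * (\<Prod>i\<in>I. y i ^ j i)))"
        by (rule sum.group) (use insert.prems(1) jK in auto)
      also have "\<dots> = (\<Sum>j\<in>J. c j * (\<Prod>i\<in>insert i0 I. (y(i0 := t)) i ^ j i))"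
      proof (intro sum.cong refl arg_cong2[where f="(*)"])
        fix j
        have "(\<Prod>i\<in>I. (y(i0 := t)) i ^ j i) = (\<Prod>i\<in>I. y i ^ j i)"
          using insert.hyps(2) by (intro prod.cong) auto
        then show "t ^ j i0 * (\<Prod>i\<in>I. y i ^ j i) = (\<Prod>i\<in>insert i0 I. (y(i0 := t)) i ^ j i)"
          using insert.hyps by simp
      qed
      also have "\<dots> = 0" using insert.prems(3) by blast
      finally show "(\<Sum>k\<le>K. b k y * t ^ k) = 0" .
    qed
    then have "\<forall>t. (\<Sum>k\<le>K. b k y * t ^ k) = 0" by blast
    then show ?thesis using polyfun_eq_0[of "\<lambda>k. b k y" K] that by blast
  qed
  show ?case
  proof
    fix j assume j: "j \<in> J"
    let ?J = "{j'\<in>J. j' i0 = j i0}"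
    have "\<forall>j'\<in>?J. c j' = 0"
    proof (rule insert.IH)
      show "finite ?J" using insert.prems(1) by simp
      show "\<forall>ja\<in>?J. \<forall>j'\<in>?J. (\<forall>i\<in>I. ja i = j' i) \<longrightarrow> ja = j'"
        using insert.prems(2) by auto
      show "\<forall>y. (\<Sum>j'\<in>?J. c j' * (\<Prod>i\<in>I. y i ^ j' i)) = 0"
        using b0[OF jK[OF j]] unfolding b_def by blast
    qed
    then show "c j = 0" using j by auto
  qed
qed


context
  fixes S :: "real^'n::finite^'n"
  assumes symS: "transpose S = S"
    and pdS: "\<forall>x::real^'n. x \<noteq> 0 \<longrightarrow> x \<bullet> (S *v x) > 0"
begin

lemma S_inj: "inj ((*v) S)"
proof -
  have "\<forall>x. S *v x = 0 \<longrightarrow> x = 0" using pdS by force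
  then have "\<exists>B. B ** S = mat 1" using matrix_left_invertible_ker by blast
  then show ?thesis using matrix_left_invertible_injective by blast
qed

lemma S_invertible: "invertible S"
  using S_inj matrix_left_invertible_injective invertible_left_inverse by blast

lemma Si_props: "S ** matrix_inv S = mat 1" "matrix_inv S ** S = mat 1"
proof -
  have "\<exists>A'. S ** A' = mat 1 \<and> A' ** S = mat 1" using S_invertible unfolding invertible_def by blast
  from someI_ex[OF this] show "S ** matrix_inv S = mat 1" "matrix_inv S ** S = mat 1"
    unfolding matrix_inv_def by auto
qed

lemma Si_S [simp]: "matrix_inv S *v (S *v z) = z"
  by (simp add: matrix_vector_mul_assoc Si_props)

lemma S_Si [simp]: "S *v (matrix_inv S *v z) = z"
  by (simp add: matrix_vector_mul_assoc Si_props)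

lemma Si_sym: "transpose (matrix_inv S) = matrix_inv S"
proof -
  have "transpose (matrix_inv S) ** S = mat 1"
    by (metis Si_props(1) matrix_transpose_mul symS transpose_mat)
  then have "transpose (matrix_inv S) = transpose (matrix_inv S) ** (S ** matrix_inv S)"
    by (simp add: Si_props)
  also have "\<dots> = matrix_inv S"
    by (simp add: matrix_mul_assoc \<open>transpose (matrix_inv S) ** S = mat 1\<close>)
  finally show ?thesis .
qed

lemma detS: "det S \<noteq> 0"
  using S_invertible invertible_det_nz by blast

definition "qf x = x \<bullet> (matrix_inv S *v x)"
definition "ai i x = (matrix_inv S *v x) $ i"

lemma qf_pos: "x \<noteq> 0 \<Longrightarrow> qf x > 0"
proof -
  assume "x \<noteq> 0"
  define z where "z = matrix_inv S *v x"
  have x: "x = S *v z" by (simp add: z_def)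
  have "z \<noteq> 0" using \<open>x \<noteq> 0\<close> x by auto
  then have "z \<bullet> (S *v z) > 0" using pdS by auto
  then show ?thesis unfolding qf_def using x by (simp add: inner_commute)
qed

lemma inner_Si_axis: "x \<bullet> (matrix_inv S *v axis i 1) = ai i x"
proof -
  have "x \<bullet> (matrix_inv S *v axis i 1) = (x v* matrix_inv S) $ i"
    by (simp add: inner_vec_def matrix_vector_mult_def vector_matrix_mult_def axis_def
        sum_distrib_left mult.commute if_distrib cong: if_cong)
  also have "\<dots> = (transpose (matrix_inv S) *v x) $ i"
    by (simp add: transpose_matrix_vector)
  finally show ?thesis by (simp add: Si_sym ai_def)
qed


lemma ai_add: "ai i (x + y) = ai i x + ai i y"
  by (simp add: ai_def matrix_vector_right_distrib)
lemma ai_scale: "ai i (c *\<^sub>R x) = c * ai i x"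
  by (simp add: ai_def matrix_vector_mult_scaleR)

lemma qf_shift: "qf (x + t *\<^sub>R axis i 1) = qf x + t * (2 * ai i x) + t^2 * qf (axis i 1)"
proof -
  have e: "axis i 1 \<bullet> (matrix_inv S *v x) = ai i x"
    by (simp add: ai_def inner_axis')
  show ?thesis
    unfolding qf_def
    by (simp add: matrix_vector_right_distrib matrix_vector_mult_scaleR inner_add_left inner_add_right
        e inner_Si_axis[unfolded qf_def] ai_add ai_scale algebra_simps power2_eq_square)
qed

lemma gauss_eq: "gauss_density S x = (2 * pi) powr (- real CARD('n) / 2) * (det S) powr (- 1 / 2) * exp (- (1/2) * qf x)"
  by (simp add: gauss_density_def qf_def)

lemma gauss_pos: "gauss_density S x > 0"
  using detS by (simp add: gauss_density_def)

lemma gauss_deriv: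
  "((\<lambda>t. gauss_density S (x + t *\<^sub>R axis i 1)) has_real_derivative (- ai i x * gauss_density S x)) (at 0)"
proof -
  define C where "C = (2 * pi) powr (- real CARD('n) / 2) * (det S) powr (- 1 / 2)"
  have eq: "(\<lambda>t. gauss_density S (x + t *\<^sub>R axis i 1)) =
      (\<lambda>t. C * exp (- (1/2) * (qf x + t * (2 * ai i x) + t^2 * qf (axis i 1))))"
    by (simp add: gauss_eq C_def qf_shift)
  have "((\<lambda>t. C * exp (- (1/2) * (qf x + t * (2 * ai i x) + t^2 * qf (axis i 1)))) has_real_derivative
      C * (exp (- (1/2) * (qf x + 0 * (2 * ai i x) + 0^2 * qf (axis i 1))) *
        (- (1/2) * (0 + 1 * (2 * ai i x) + (of_nat 2 * 0 ^ 1 * 1) * qf (axis i 1))))) (at 0)"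
    by (intro derivative_eq_intros refl) auto
  then show ?thesis unfolding eq by (simp add: gauss_eq C_def algebra_simps)
qed


lemma ai_pf: "pf 1 (ai i)"
proof -
  have "ai i = (\<lambda>x. (matrix_inv S $ i) \<bullet> x)"
    by (auto simp: ai_def matrix_vector_mult_def inner_vec_def)
  then show ?thesis using pf_lin by metis
qed

lemma fold_gauss:
  "\<exists>P. pf (length ds) P \<and> foldr pdiff ds (gauss_density S) = (\<lambda>x. P x * gauss_density S x) \<and>
     (\<forall>x. ((\<lambda>s. P (s *\<^sub>R x) / s ^ length ds) \<longlongrightarrow> (-1) ^ length ds * prod_list (map (\<lambda>d. ai d x) ds)) at_top)"
proof (induction ds)
  case Nil
  show ?case by (intro exI[of _ "\<lambda>_. 1"]) (auto intro: pf_const)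
next
  case (Cons d ds)
  then obtain P where P: "pf (length ds) P" "foldr pdiff ds (gauss_density S) = (\<lambda>x. P x * gauss_density S x)"
    "\<forall>x. ((\<lambda>s. P (s *\<^sub>R x) / s ^ length ds) \<longlongrightarrow> (-1) ^ length ds * prod_list (map (\<lambda>d. ai d x) ds)) at_top"
    by blast
  define k where "k = length ds"
  obtain Q where Q: "pf (k - 1) Q" "\<forall>x. ((\<lambda>t. P (x + t *\<^sub>R axis d 1)) has_real_derivative Q x) (at 0)"
    using pf_deriv[OF P(1), of d] unfolding k_def by blast
  define P' where "P' = (\<lambda>x. Q x - P x * ai d x)"
  have eq: "foldr pdiff (d # ds) (gauss_density S) = (\<lambda>x. P' x * gauss_density S x)"
  proof
    fix x
    have "((\<lambda>t. P (x + t *\<^sub>R axis d 1) * gauss_density S (x + t *\<^sub>R axis d 1)) has_real_derivative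
        Q x * gauss_density S x + P x * (- ai d x * gauss_density S x)) (at 0)"
      using DERIV_mult[OF Q(2)[rule_format, of x] gauss_deriv[of x d]] by (simp add: algebra_simps)
    then show "foldr pdiff (d # ds) (gauss_density S) x = P' x * gauss_density S x"
      by (simp add: P(2) pdiff_def P'_def DERIV_imp_deriv algebra_simps)
  qed
  have QK: "pf k Q" using Q(1) by (auto intro: pf_mono)
  have pfP': "pf (length (d # ds)) P'"
  proof -
    have "pf (k + 1) Q" using QK by (auto intro: pf_mono)
    moreover have "pf (k + 1) (\<lambda>x. P x * ai d x)" using pf_mul[OF P(1) ai_pf[of d]] k_def by simp
    ultimately show ?thesis unfolding P'_def k_def by (auto intro: pf_diff)
  qed
  have lim: "((\<lambda>s. P' (s *\<^sub>R x) / s ^ length (d # ds)) \<longlongrightarrow>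
     (-1) ^ length (d # ds) * prod_list (map (\<lambda>d. ai d x) (d # ds))) at_top" for x
  proof -
    have L: "((\<lambda>s. Q (s *\<^sub>R x) / s ^ (k + 1) - (P (s *\<^sub>R x) / s ^ k) * ai d x) \<longlongrightarrow>
       0 - ((-1) ^ k * prod_list (map (\<lambda>d. ai d x) ds)) * ai d x) at_top"
      using P(3) unfolding k_def[symmetric]
      by (intro tendsto_diff tendsto_mult pf_lim0[OF QK] tendsto_const) auto
    have "eventually (\<lambda>s. Q (s *\<^sub>R x) / s ^ (k + 1) - (P (s *\<^sub>R x) / s ^ k) * ai d x =
        P' (s *\<^sub>R x) / s ^ length (d # ds)) at_top"
      using eventually_gt_at_top[of "0::real"]
      by eventually_elim (simp add: P'_def ai_scale k_def field_simps)
    from tendsto_cong[THEN iffD1, OF this L] show ?thesis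
      by (simp add: k_def algebra_simps)
  qed
  show ?case using pfP' eq lim by blast
qed


lemma hermite_props:
  "pf (mi_order j) (hermite S j) \<and>
   (\<forall>x. ((\<lambda>s. hermite S j (s *\<^sub>R x) / s ^ mi_order j) \<longlongrightarrow> (\<Prod>i\<in>UNIV. ai i x ^ j i)) at_top)"
proof -
  define ds where "ds = (SOME ds. \<forall>i. count_list ds i = j i)"
  have ds: "\<forall>i. count_list ds i = j i" unfolding ds_def using someI_ex[OF ex_count_list[of j]] by blast
  have len: "length ds = mi_order j"
    using sum_count_set[of ds UNIV] ds by (simp add: mi_order_def)
  obtain P where P: "pf (length ds) P" "foldr pdiff ds (gauss_density S) = (\<lambda>x. P x * gauss_density S x)"
    "\<forall>x. ((\<lambda>s. P (s *\<^sub>R x) / s ^ length ds) \<longlongrightarrow> (-1) ^ length ds * prod_list (map (\<lambda>d. ai d x) ds)) at_top"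
    using fold_gauss by blast
  have H: "hermite S j = (\<lambda>x. (-1) ^ mi_order j * P x)"
  proof
    fix x
    have "mderiv j (gauss_density S) = (\<lambda>x. P x * gauss_density S x)"
      using P(2) by (simp add: mderiv_def ds_def)
    then show "hermite S j x = (-1) ^ mi_order j * P x"
      using gauss_pos[of x] by (simp add: hermite_def)
  qed
  have "pf (mi_order j) (hermite S j)" unfolding H using pf_cmul P(1) len by simp
  moreover have "((\<lambda>s. hermite S j (s *\<^sub>R x) / s ^ mi_order j) \<longlongrightarrow> (\<Prod>i\<in>UNIV. ai i x ^ j i)) at_top" for x
  proof -
    have "((\<lambda>s. (-1) ^ mi_order j * (P (s *\<^sub>R x) / s ^ length ds)) \<longlongrightarrow>
        (-1) ^ mi_order j * ((-1) ^ length ds * prod_list (map (\<lambda>d. ai d x) ds))) at_top"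
      using P(3) by (intro tendsto_mult tendsto_const) auto
    moreover have "(-1) ^ mi_order j * ((-1) ^ length ds * prod_list (map (\<lambda>d. ai d x) ds)) =
        (\<Prod>i\<in>UNIV. ai i x ^ j i :: real)"
      using len ds by (simp add: prod_list_count flip: power_add)
    ultimately show ?thesis unfolding H len by simp
  qed
  ultimately show ?thesis by blast
qed


lemma gauss_integrable:
  assumes "prob_space M" "distributed M lborel X (\<lambda>x. ennreal (gauss_density S x))"
  shows "integrable lborel (gauss_density S)"
proof -
  interpret prob_space M by fact
  have "integrable lborel (\<lambda>x. gauss_density S x * 1) \<longleftrightarrow> integrable M (\<lambda>x. 1::real)"
    using gauss_pos by (intro distributed_integrable[OF assms(2)]) (auto intro: less_imp_le)
  then show ?thesis by simp
qed

lemma qf_scale: "qf (c *\<^sub>R x) = c^2 * qf x"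
  by (simp add: qf_def matrix_vector_mult_scaleR power2_eq_square)

lemma qf_cont: "continuous_on UNIV qf"
  unfolding qf_def by (intro continuous_intros) 

lemma coercive: "\<exists>m>0. \<forall>x. qf x \<ge> m * (norm x)^2"
proof -
  have "axis undefined 1 \<in> sphere (0::real^'n) 1" by simp
  then have ne: "sphere (0::real^'n) 1 \<noteq> {}" by blast
  obtain z where z: "z \<in> sphere 0 1" "\<forall>y\<in>sphere 0 1. qf z \<le> qf y"
    using continuous_attains_inf[OF compact_sphere ne continuous_on_subset[OF qf_cont]] by blast
  have m: "qf z > 0" using z(1) by (intro qf_pos) auto
  have "qf x \<ge> qf z * (norm x)^2" for x
  proof (cases "x = 0")
    case True then show ?thesis by (simp add: qf_def)
  next
    case False
    have "qf z \<le> qf ((1 / norm x) *\<^sub>R x)" using z(2) False by auto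
    also have "\<dots> = qf x / (norm x)^2" by (simp add: qf_scale power_divide)
    finally show ?thesis using False by (simp add: field_simps)
  qed
  with m show ?thesis by blast
qed

lemma pf_integrable:
  assumes "prob_space M" "distributed M lborel X (\<lambda>x. ennreal (gauss_density S x))"
    and "pf k p"
  shows "integrable lborel (\<lambda>x. gauss_density S x * p x)"
proof -
  obtain C where C: "C \<ge> 0" "\<forall>x. \<bar>p x\<bar> \<le> C * (1 + norm x) ^ k" using pf_bound[OF assms(3)] by blast
  obtain m where m: "m > 0" "\<forall>x. qf x \<ge> m * (norm x)^2" using coercive by blast
  define C0 where "C0 = (2 * pi) powr (- real CARD('n) / 2) * (det S) powr (- 1 / 2)"
  have C0: "C0 > 0" using detS by (simp add: C0_def)
  define c where "c = 1 / sqrt 2"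
  have c2: "c^2 = 1/2" by (simp add: c_def power_divide)
  have gc: "gauss_density S (c *\<^sub>R x) = C0 * exp (- (1/4) * qf x)" for x
    by (simp add: gauss_eq C0_def qf_scale c2)
  define K where "K = C * exp (real k ^ 2 / m)"
  have I: "integrable lborel (\<lambda>x. K * gauss_density S (c *\<^sub>R x))"
    using integrable_scale[OF gauss_integrable[OF assms(1,2)], of c] by (simp add: c_def)
  have B: "norm (gauss_density S x * p x) \<le> norm (K * gauss_density S (c *\<^sub>R x))" for x
  proof -
    define r where "r = norm x"
    have r: "r \<ge> 0" by (simp add: r_def)
    have e1: "(1 + r) ^ k \<le> exp (real k * r)"
    proof -
      have "(1 + r) ^ k \<le> exp r ^ k" using r by (intro power_mono) auto
      then show ?thesis by (simp add: exp_of_nat_mult)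
    qed
    have e2: "real k * r - m * r^2 / 4 \<le> real k ^ 2 / m"
    proof -
      have "real k ^ 2 / m - (real k * r - m * r^2 / 4) = (m * r / 2 - real k)^2 / m"
        using m(1) by (simp add: power2_eq_square field_simps)
      moreover have "(m * r / 2 - real k)^2 / m \<ge> 0" using m(1) by simp
      ultimately show ?thesis by linarith
    qed
    have "(1 + r) ^ k * exp (- (1/4) * qf x) \<le> exp (real k * r) * exp (- (m * r^2 / 4))"
      using e1 m(2)[rule_format, of x] by (intro mult_mono) (auto simp: r_def)
    also have "\<dots> = exp (real k * r - m * r^2 / 4)" by (simp add: exp_add[symmetric])
    also have "\<dots> \<le> exp (real k ^ 2 / m)" using e2 by simp
    finally have B: "(1 + r) ^ k * exp (- (1/4) * qf x) \<le> exp (real k ^ 2 / m)" .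
    have "norm (gauss_density S x * p x) = C0 * exp (- (1/4) * qf x) * exp (- (1/4) * qf x) * \<bar>p x\<bar>"
      using C0 by (simp add: gauss_eq C0_def abs_mult exp_add[symmetric])
    also have "\<dots> \<le> C0 * exp (- (1/4) * qf x) * exp (- (1/4) * qf x) * (C * (1 + r) ^ k)"
      using C(2) C0 by (intro mult_left_mono) (auto simp: r_def)
    also have "\<dots> = C0 * exp (- (1/4) * qf x) * (C * ((1 + r) ^ k * exp (- (1/4) * qf x)))"
      by (simp add: algebra_simps)
    also have "\<dots> \<le> C0 * exp (- (1/4) * qf x) * (C * exp (real k ^ 2 / m))"
      using B C0 C(1) by (intro mult_left_mono) auto
    also have "\<dots> = norm (K * gauss_density S (c *\<^sub>R x))"
      using C0 C(1) by (simp add: gc K_def abs_mult)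
    finally show ?thesis .
  qed
  have Me: "(\<lambda>x. gauss_density S x * p x) \<in> borel_measurable lborel"
  proof -
    have "continuous_on UNIV (gauss_density S)"
      unfolding gauss_eq by (intro continuous_intros qf_cont)
    then have "gauss_density S \<in> borel_measurable borel" using borel_measurable_continuous_onI by blast
    then show ?thesis using pf_meas[OF assms(3)] by simp
  qed
  show ?thesis
    by (rule Bochner_Integration.integrable_bound[OF I Me]) (use B in \<open>auto intro: always_eventually\<close>)
qed


lemma gauss_cont: "continuous_on UNIV (gauss_density S)"
  unfolding gauss_eq by (intro continuous_intros qf_cont)

lemma ai_S: "ai i (S *v z) = z $ i"
  by (simp add: ai_def)

lemma hermite_nonzero: "\<exists>x. hermite S j x \<noteq> 0"
proof (rule ccontr)
  assume "\<not> ?thesis"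
  then have H0: "\<And>x. hermite S j x = 0" by blast
  define x0 where "x0 = S *v (\<chi> i. 1)"
  have "((\<lambda>s. hermite S j (s *\<^sub>R x0) / s ^ mi_order j) \<longlongrightarrow> (\<Prod>i\<in>UNIV. ai i x0 ^ j i)) at_top"
    using hermite_props by blast
  then have "((\<lambda>s::real. 0::real) \<longlongrightarrow> 1) at_top" by (simp add: H0 x0_def ai_S)
  moreover have "((\<lambda>s::real. 0::real) \<longlongrightarrow> 0) at_top" by simp
  ultimately show False using tendsto_unique[OF trivial_limit_at_top_linorder] by fastforce
qed

lemma main_result:
  fixes M :: "'a measure" and X :: "'a \<Rightarrow> real^'n" and js :: "('n \<Rightarrow> nat) list"
  assumes PS: "prob_space M"
    and D: "distributed M lborel X (\<lambda>x. ennreal (gauss_density S x))"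
    and dist: "distinct js" and js: "set js = {j. mi_order j = l}"
  shows "pos_def_mat (length js)
           (\<lambda>a b. prob_space.expectation M (\<lambda>\<omega>. psi S (js!a) (X \<omega>) * psi S (js!b) (X \<omega>)))"
proof -
  interpret prob_space M by fact
  define n where "n = length js"
  define H where "H a = hermite S (js ! a)" for a
  define Nc where "Nc a = (LINT y|lborel. (H a y)^2 * gauss_density S y)" for a
  have ord: "mi_order (js ! a) = l" if "a < n" for a
    using that js nth_mem unfolding n_def by blast
  have pfH: "pf l (H a)" if "a < n" for a
    using hermite_props[of "js ! a"] ord[OF that] by (simp add: H_def)
  have limH: "((\<lambda>s. H a (s *\<^sub>R x) / s ^ l) \<longlongrightarrow> (\<Prod>i\<in>UNIV. ai i x ^ (js ! a) i)) at_top"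
    if "a < n" for a x
    using hermite_props[of "js ! a"] ord[OF that] by (simp add: H_def)
  have Npos: "Nc a > 0" if "a < n" for a
  proof -
    obtain x0 where x0: "H a x0 \<noteq> 0" using hermite_nonzero unfolding H_def by blast
    have eqf: "(\<lambda>y. (H a y)^2 * gauss_density S y) = (\<lambda>y. gauss_density S y * (H a y * H a y))"
      by (auto simp: power2_eq_square)
    have "integrable lborel (\<lambda>y. gauss_density S y * (H a y * H a y))"
      using pf_integrable[OF PS D pf_mul[OF pfH[OF that] pfH[OF that]]] .
    then show ?thesis unfolding Nc_def eqf
      using x0 gauss_pos[of x0] gauss_pos
      by (intro integral_pos[where z=x0] continuous_intros gauss_cont pf_cont[OF pfH[OF that]])
         (auto simp: zero_less_mult_iff intro: mult_nonneg_nonneg[OF less_imp_le zero_le_square])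
  qed
  define P where "P a = (\<lambda>x. H a x / sqrt (Nc a))" for a
  have psiP: "psi S (js ! a) = P a" for a
    by (auto simp: psi_def P_def Nc_def H_def)
  have pfP: "pf l (P a)" if "a < n" for a
    using pf_cmul[OF pfH[OF that], of "1 / sqrt (Nc a)"] by (simp add: P_def)
  have gmeas: "(\<lambda>x. gauss_density S x) \<in> borel_measurable lborel"
    using borel_measurable_continuous_onI[OF gauss_cont] by simp
  have E: "expectation (\<lambda>\<omega>. P a (X \<omega>) * P b (X \<omega>)) = (LINT x|lborel. gauss_density S x * (P a x * P b x))"
    if "a < n" "b < n" for a b
  proof -
    have m: "(\<lambda>x. P a x * P b x) \<in> borel_measurable lborel"
      using pf_meas[OF pfP[OF that(1)]] pf_meas[OF pfP[OF that(2)]] by simp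
    have "\<And>x. x \<in> space lborel \<Longrightarrow> 0 \<le> gauss_density S x" using gauss_pos less_imp_le by blast
    from distributed_integral[OF D m this] show ?thesis by simp
  qed
  have IP: "integrable lborel (\<lambda>x. gauss_density S x * (P a x * P b x))" if "a < n" "b < n" for a b
    using pf_integrable[OF PS D pf_mul[OF pfP[OF that(1)] pfP[OF that(2)]]] .
  show ?thesis
    unfolding pos_def_mat_def n_def[symmetric] psiP
  proof (intro allI impI)
    fix v :: "nat \<Rightarrow> real"
    assume v: "\<exists>a<n. v a \<noteq> 0"
    define g where "g x = (\<Sum>a<n. v a * P a x)" for x
    have "(\<Sum>a<n. \<Sum>b<n. v a * expectation (\<lambda>\<omega>. P a (X \<omega>) * P b (X \<omega>)) * v b) =
        (\<Sum>a<n. \<Sum>b<n. LINT x|lborel. v a * v b * (gauss_density S x * (P a x * P b x)))"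
      by (intro sum.cong refl) (simp add: E integral_mult_right_zero)
    also have "\<dots> = (\<Sum>a<n. LINT x|lborel. (\<Sum>b<n. v a * v b * (gauss_density S x * (P a x * P b x))))"
      by (intro sum.cong refl, rule Bochner_Integration.integral_sum[symmetric]) (auto intro!: integrable_mult_right IP)
    also have "\<dots> = (LINT x|lborel. (\<Sum>a<n. \<Sum>b<n. v a * v b * (gauss_density S x * (P a x * P b x))))"
      by (rule Bochner_Integration.integral_sum[symmetric]) (auto intro!: integrable_sum integrable_mult_right IP)
    also have "\<dots> = (LINT x|lborel. gauss_density S x * (g x * g x))"
      by (intro Bochner_Integration.integral_cong refl)
         (simp add: g_def sum_distrib_left sum_distrib_right algebra_simps)
    finally have eqQ: "(\<Sum>a<n. \<Sum>b<n. v a * expectation (\<lambda>\<omega>. P a (X \<omega>) * P b (X \<omega>)) * v b) =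
        (LINT x|lborel. gauss_density S x * (g x * g x))" .
    have pfg: "pf l g" unfolding g_def by (intro pf_sum pf_cmul pfP) auto
    have "\<exists>x0. g x0 \<noteq> 0"
    proof (rule ccontr)
      assume "\<not> ?thesis"
      then have g0: "\<And>x. g x = 0" by blast
      define c where "c a = v a / sqrt (Nc a)" for a
      have Z: "(\<Sum>a<n. c a * (\<Prod>i\<in>UNIV. ai i x ^ (js ! a) i)) = 0" for x
      proof -
        have "((\<lambda>s. \<Sum>a<n. c a * (H a (s *\<^sub>R x) / s ^ l)) \<longlongrightarrow>
            (\<Sum>a<n. c a * (\<Prod>i\<in>UNIV. ai i x ^ (js ! a) i))) at_top"
          by (intro tendsto_sum tendsto_mult tendsto_const limH) auto
        moreover have "(\<lambda>s. \<Sum>a<n. c a * (H a (s *\<^sub>R x) / s ^ l)) = (\<lambda>s. g (s *\<^sub>R x) / s ^ l)"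
          by (auto simp: g_def c_def P_def sum_divide_distrib)
        ultimately have "((\<lambda>s::real. 0::real) \<longlongrightarrow> (\<Sum>a<n. c a * (\<Prod>i\<in>UNIV. ai i x ^ (js ! a) i))) at_top"
          by (simp add: g0)
        then show ?thesis using tendsto_unique[OF trivial_limit_at_top_linorder] tendsto_const by blast
      qed
      define cc where "cc j = c (SOME a. a < n \<and> js ! a = j)" for j
      have ccc: "cc (js ! a) = c a" if "a < n" for a
      proof -
        have "\<exists>a'. a' < n \<and> js ! a' = js ! a" using that by blast
        from someI_ex[OF this] have "(SOME a'. a' < n \<and> js ! a' = js ! a) = a"
          using dist that nth_eq_iff_index_eq unfolding n_def by blast
        then show ?thesis by (simp add: cc_def)
      qed
      have bij: "bij_betw ((!) js) {..<n} (set js)" using bij_betw_nth[OF dist] n_def by simp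
      have "\<forall>j\<in>set js. cc j = 0"
      proof (rule mono_indep[of UNIV])
        show "\<forall>y. (\<Sum>j\<in>set js. cc j * (\<Prod>i\<in>UNIV. y i ^ j i)) = 0"
        proof
          fix y :: "'n \<Rightarrow> real"
          have "(\<Sum>j\<in>set js. cc j * (\<Prod>i\<in>UNIV. y i ^ j i)) =
              (\<Sum>a<n. cc (js ! a) * (\<Prod>i\<in>UNIV. y i ^ (js ! a) i))"
            using sum.reindex_bij_betw[OF bij, of "\<lambda>j. cc j * (\<Prod>i\<in>UNIV. y i ^ j i)"] by simp
          also have "\<dots> = (\<Sum>a<n. c a * (\<Prod>i\<in>UNIV. ai i (S *v (\<chi> i. y i)) ^ (js ! a) i))"
            by (intro sum.cong refl) (simp add: ccc ai_S)
          also have "\<dots> = 0" by (rule Z)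
          finally show "(\<Sum>j\<in>set js. cc j * (\<Prod>i\<in>UNIV. y i ^ j i)) = 0" .
        qed
      qed auto
      then have "\<forall>a<n. v a = 0"
        using ccc Npos unfolding c_def n_def by (metis nth_mem n_def divide_eq_0_iff less_numeral_extra(3) real_sqrt_eq_zero_cancel_iff)
      then show False using v by blast
    qed
    then obtain x0 where x0: "g x0 \<noteq> 0" by blast
    have "(LINT x|lborel. gauss_density S x * (g x * g x)) > 0"
      using x0 gauss_pos[of x0] gauss_pos
      by (intro integral_pos[where z=x0] continuous_intros gauss_cont pf_cont[OF pfg]
          pf_integrable[OF PS D pf_mul[OF pfg pfg]]) (auto simp: zero_less_mult_iff intro: mult_nonneg_nonneg[OF less_imp_le zero_le_square])
    then show "(\<Sum>a<n. \<Sum>b<n. v a * expectation (\<lambda>\<omega>. P a (X \<omega>) * P b (X \<omega>)) * v b) > 0"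
      using eqQ by simp
  qed
qed

end

theorem corollary12:
  fixes M :: "'a measure" and X :: "'a \<Rightarrow> real^'n"
    and S :: "real^'n^'n" and l :: nat and js :: "('n \<Rightarrow> nat) list"
  assumes "prob_space M"
    and "transpose S = S"
    and "\<forall>x::real^'n. x \<noteq> 0 \<longrightarrow> x \<bullet> (S *v x) > 0"
    and "distributed M lborel X (\<lambda>x. ennreal (gauss_density S x))"
    and "distinct js" and "set js = {j. mi_order j = l}"
  shows "(\<forall>a<length js. \<forall>b<length js.
            prob_space.expectation M (\<lambda>\<omega>. psi S (js!a) (X \<omega>) * psi S (js!b) (X \<omega>))
          = prob_space.expectation M (\<lambda>\<omega>. psi S (js!b) (X \<omega>) * psi S (js!a) (X \<omega>)))
       \<and> pos_def_mat (length js)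
           (\<lambda>a b. prob_space.expectation M (\<lambda>\<omega>. psi S (js!a) (X \<omega>) * psi S (js!b) (X \<omega>)))"
  using main_result[OF assms(2,3,1,4,5,6)] by (simp add: mult.commute)

end
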